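(* Assume $X$ is convex, $f$ is convex, and $X^\infty\cap\mathcal{K}(f)\neq\{0\}$. Then there exists a sequence $u_k\in\mathbb{R}^n$ with $u_k\to0$ such that $\mathrm{Sol}(u_k)=\emptyset$ for every $k\in\mathbb{N}$.
   Context: Standing assumptions: $f:\mathbb{R}^n\to\mathbb{R}\cup\{\pm\infty\}$ is proper (never $-\infty$ and finite at some point) and lower semicontinuous; $X\subset\mathbb{R}^n$ is a nonempty closed set with $\operatorname{dom}f\cap X$ unbounded. $X^\infty=\{u:\exists t_k\to+\infty,\ \exists x_k\in X,\ x_k/t_k\to u\}$; $f^\infty(d)=\inf\{\liminf_{k} f(t_kd_k)/t_k:\ t_k\to+\infty,\ d_k\to d\}$; $\mathcal{K}(f)=\{d: f^\infty(d)\le 0\}$. For $u\in\mathbb{R}^n$, $f_u(x)=f(x)-\langle u,x\rangle$ and $\mathrm{Sol}(u)=\{x\in X: f_u(x)\le f_u(y)\ \forall y\in X\}$. *)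

theory Defs
  imports "HOL-Analysis.Analysis"
begin

definition proper_fun :: "('a::euclidean_space \<Rightarrow> ereal) \<Rightarrow> bool" where
  "proper_fun f \<longleftrightarrow> (\<forall>x. f x \<noteq> -\<infinity>) \<and> (\<exists>x. \<bar>f x\<bar> \<noteq> \<infinity>)"

definition lsc_fun :: "('a::euclidean_space \<Rightarrow> ereal) \<Rightarrow> bool" where
  "lsc_fun f \<longleftrightarrow> (\<forall>x s. s \<longlonglongrightarrow> x \<longrightarrow> f x \<le> liminf (\<lambda>k. f (s k)))"

definition dom_fun :: "('a::euclidean_space \<Rightarrow> ereal) \<Rightarrow> 'a set" where
  "dom_fun f = {x. f x < \<infinity>}"

text \<open>Convexity of an extended-valued function (never \<open>-\<infinity>\<close> here).\<close>
definition convex_fun :: "('a::euclidean_space \<Rightarrow> ereal) \<Rightarrow> bool" where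
  "convex_fun f \<longleftrightarrow> (\<forall>x y t. 0 < t \<and> t < 1 \<longrightarrow>
      f ((1 - t) *\<^sub>R x + t *\<^sub>R y) \<le> ereal (1 - t) * f x + ereal t * f y)"

definition asymp_cone :: "'a::euclidean_space set \<Rightarrow> 'a set" where
  "asymp_cone X = {u. \<exists>t :: nat \<Rightarrow> real. \<exists>x :: nat \<Rightarrow> 'a.
      filterlim t at_top sequentially \<and> (\<forall>k. x k \<in> X) \<and> (\<lambda>k. x k /\<^sub>R t k) \<longlonglongrightarrow> u}"

definition asymp_fun :: "('a::euclidean_space \<Rightarrow> ereal) \<Rightarrow> 'a \<Rightarrow> ereal" where
  "asymp_fun f d = Inf {liminf (\<lambda>k. f (t k *\<^sub>R dd k) / ereal (t k)) | t dd.
      filterlim t at_top sequentially \<and> dd \<longlonglongrightarrow> d}"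

definition Kf :: "('a::euclidean_space \<Rightarrow> ereal) \<Rightarrow> 'a set" where
  "Kf f = {d. asymp_fun f d \<le> 0}"

definition Sol :: "('a::euclidean_space \<Rightarrow> ereal) \<Rightarrow> 'a set \<Rightarrow> 'a \<Rightarrow> 'a set" where
  "Sol f X u = {x \<in> X. \<forall>y \<in> X. f x - ereal (u \<bullet> x) \<le> f y - ereal (u \<bullet> y)}"

end

theory Submission
  imports Defs
begin

lemma freq_pick:
  assumes "frequently P sequentially"
  obtains j :: "nat \<Rightarrow> nat" where "\<And>k. j k \<ge> k" "\<And>k. P (j k)"
proof -
  from assms have "\<forall>k. \<exists>n\<ge>k. P n" by (simp add: frequently_sequentially)
  then obtain j where "\<And>k. j k \<ge> k \<and> P (j k)" by metis
  then show ?thesis using that by blast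
qed

lemma ray_bound:
  fixes f :: "'a::euclidean_space \<Rightarrow> ereal"
  assumes lsc: "lsc_fun f" and cvx: "convex_fun f" and fx0: "f x0 = ereal a"
    and K: "asymp_fun f d \<le> 0" and dp: "\<delta> > 0" and sp: "s > 0"
  shows "f (x0 + s *\<^sub>R d) \<le> ereal (a + s * \<delta>)"
proof -
  have "Inf {liminf (\<lambda>k. f (t k *\<^sub>R dd k) / ereal (t k)) | t dd.
      filterlim t at_top sequentially \<and> dd \<longlonglongrightarrow> d} < ereal \<delta>"
    using K dp unfolding asymp_fun_def by (meson ereal_less(2) le_less_trans)
  then obtain t dd where tt: "filterlim t at_top sequentially" and ddl: "dd \<longlonglongrightarrow> d"
    and lm: "liminf (\<lambda>k. f (t k *\<^sub>R dd k) / ereal (t k)) < ereal \<delta>"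
    by (auto simp: Inf_less_iff)
  have fr2: "frequently (\<lambda>k. f (t k *\<^sub>R dd k) / ereal (t k) < ereal \<delta>) sequentially"
  proof -
    from lm have "\<not> (ereal \<delta> \<le> liminf (\<lambda>k. f (t k *\<^sub>R dd k) / ereal (t k)))" by simp
    then obtain y where y: "y < ereal \<delta>"
      and ne: "\<not> eventually (\<lambda>k. y < f (t k *\<^sub>R dd k) / ereal (t k)) sequentially"
      unfolding le_Liminf_iff by blast
    from ne have "frequently (\<lambda>k. f (t k *\<^sub>R dd k) / ereal (t k) \<le> y) sequentially"
      by (simp add: not_eventually not_less)
    then show ?thesis by (rule frequently_elim1) (use y in auto)
  qed
  then obtain j :: "nat \<Rightarrow> nat" where jge: "\<And>k. j k \<ge> k"
    and jP: "\<And>k. f (t (j k) *\<^sub>R dd (j k)) / ereal (t (j k)) < ereal \<delta>"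
    using freq_pick[OF fr2] by metis
  have jf: "filterlim j sequentially sequentially"
    using jge by (intro filterlim_at_top_mono[OF filterlim_ident]) auto
  define T where "T k = t (j k)" for k
  define D where "D k = dd (j k)" for k
  have T: "filterlim T at_top sequentially" unfolding T_def
    using filterlim_compose[OF tt jf] by (simp add: o_def)
  have D: "D \<longlonglongrightarrow> d" unfolding D_def
    using filterlim_compose[OF ddl jf] by (simp add: o_def)
  have TP: "f (T k *\<^sub>R D k) / ereal (T k) < ereal \<delta>" for k
    using jP unfolding T_def D_def by simp
  have evT: "eventually (\<lambda>k. T k > s) sequentially"
    using T by (simp add: filterlim_at_top_dense)
  define P where "P k = (1 - s / T k) *\<^sub>R x0 + (s / T k) *\<^sub>R (T k *\<^sub>R D k)" for k
  define B where "B k = (1 - s / T k) * a + s * \<delta>" for k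
  have inv0: "(\<lambda>k. s / T k) \<longlonglongrightarrow> 0"
    using tendsto_mult[OF tendsto_const[of s] tendsto_inverse_0_at_top[OF T]]
    by (simp add: divide_inverse)
  have PB: "eventually (\<lambda>k. f (P k) \<le> ereal (B k)) sequentially"
    using evT
  proof (rule eventually_mono)
    fix k assume Tk: "s < T k"
    then have Tpos: "T k > 0" using sp by linarith
    have lam: "0 < s / T k" "s / T k < 1" using Tk sp Tpos by (auto simp: field_simps)
    have fy: "f (T k *\<^sub>R D k) < ereal (T k * \<delta>)"
    proof (cases "f (T k *\<^sub>R D k)")
      case (real r)
      with TP[of k] Tpos have "r / T k < \<delta>" by simp
      then show ?thesis using real Tpos by (simp add: field_simps)
    next
      case PInf with TP[of k] Tpos show ?thesis by simp
    next
      case MInf then show ?thesis by simp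
    qed
    have "f (P k) \<le> ereal (1 - s / T k) * f x0 + ereal (s / T k) * f (T k *\<^sub>R D k)"
      using cvx lam unfolding convex_fun_def P_def by blast
    also have "\<dots> \<le> ereal (1 - s / T k) * ereal a + ereal (s / T k) * ereal (T k * \<delta>)"
      unfolding fx0 using fy lam by (intro add_left_mono ereal_mult_left_mono) auto
    also have "\<dots> = ereal (B k)" using Tpos by (simp add: B_def)
    finally show "f (P k) \<le> ereal (B k)" .
  qed
  have Pl: "P \<longlonglongrightarrow> x0 + s *\<^sub>R d"
  proof -
    have "P k = (1 - s / T k) *\<^sub>R x0 + s *\<^sub>R D k" if "T k \<noteq> 0" for k
      using that by (simp add: P_def)
    have e: "eventually (\<lambda>k. (1 - s / T k) *\<^sub>R x0 + s *\<^sub>R D k = P k) sequentially"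
      using evT sp by (auto elim!: eventually_mono simp: P_def)
    have "(\<lambda>k. (1 - s / T k) *\<^sub>R x0 + s *\<^sub>R D k) \<longlonglongrightarrow> (1 - 0) *\<^sub>R x0 + s *\<^sub>R d"
      by (intro tendsto_intros inv0 D)
    then show ?thesis using e by (simp add: tendsto_cong[symmetric] Lim_transform_eventually)
  qed
  have Bl: "(\<lambda>k. ereal (B k)) \<longlonglongrightarrow> ereal (a + s * \<delta>)"
  proof -
    have "(\<lambda>k. (1 - s / T k) * a + s * \<delta>) \<longlonglongrightarrow> (1 - 0) * a + s * \<delta>"
      by (intro tendsto_intros inv0)
    then show ?thesis unfolding B_def by (simp add: tendsto_ereal)
  qed
  have "f (x0 + s *\<^sub>R d) \<le> liminf (\<lambda>k. f (P k))"
    using lsc Pl unfolding lsc_fun_def by blast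
  also have "\<dots> \<le> liminf (\<lambda>k. ereal (B k))" by (rule Liminf_mono[OF PB])
  also have "\<dots> = ereal (a + s * \<delta>)" by (rule lim_imp_Liminf[OF _ Bl]) simp
  finally show ?thesis .
qed

lemma ray_in:
  fixes X :: "'a::euclidean_space set"
  assumes cX: "convex X" and clX: "closed X" and x0: "x0 \<in> X"
    and d: "d \<in> asymp_cone X" and sp: "s > 0"
  shows "x0 + s *\<^sub>R d \<in> X"
proof -
  obtain t x where tt: "filterlim t at_top sequentially" and xX: "\<And>k. x k \<in> X"
    and xl: "(\<lambda>k. x k /\<^sub>R t k) \<longlonglongrightarrow> d"
    using d unfolding asymp_cone_def by blast
  have evT: "eventually (\<lambda>k. t k > s) sequentially"
    using tt by (simp add: filterlim_at_top_dense)
  define Q where "Q k = (1 - s / t k) *\<^sub>R x0 + (s / t k) *\<^sub>R x k" for k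
  have inv0: "(\<lambda>k. s / t k) \<longlonglongrightarrow> 0"
    using tendsto_mult[OF tendsto_const[of s] tendsto_inverse_0_at_top[OF tt]]
    by (simp add: divide_inverse)
  have evQ: "eventually (\<lambda>k. Q k \<in> X) sequentially"
    using evT
  proof (rule eventually_mono)
    fix k assume "s < t k"
    then have "0 \<le> s / t k" "s / t k \<le> 1" using sp by (auto simp: field_simps)
    then show "Q k \<in> X" unfolding Q_def
      using cX x0 xX[of k] unfolding convex_def by (metis diff_add_cancel diff_ge_0_iff_ge)
  qed
  have e: "eventually (\<lambda>k. (1 - s / t k) *\<^sub>R x0 + s *\<^sub>R (x k /\<^sub>R t k) = Q k) sequentially"
    using evT sp by (auto elim!: eventually_mono simp: Q_def divide_inverse)
  have "(\<lambda>k. (1 - s / t k) *\<^sub>R x0 + s *\<^sub>R (x k /\<^sub>R t k)) \<longlonglongrightarrow> (1 - 0) *\<^sub>R x0 + s *\<^sub>R d"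
    by (intro tendsto_intros inv0 xl)
  then have "Q \<longlonglongrightarrow> x0 + s *\<^sub>R d" using e by (simp add: Lim_transform_eventually)
  then show ?thesis using Lim_in_closed_set[OF clX evQ] by simp
qed

lemma sol_empty:
  fixes f :: "'a::euclidean_space \<Rightarrow> ereal" and X :: "'a set"
  assumes pr: "proper_fun f" and lsc: "lsc_fun f" and cvx: "convex_fun f" and cX: "convex X" and clX: "closed X"
    and x0: "x0 \<in> X" and fx0: "f x0 = ereal a"
    and dA: "d \<in> asymp_cone X" and dK: "asymp_fun f d \<le> 0" and d0: "d \<noteq> 0"
    and ep: "\<epsilon> > 0"
  shows "Sol f X (\<epsilon> *\<^sub>R d) = {}"
proof (rule ccontr)
  assume "Sol f X (\<epsilon> *\<^sub>R d) \<noteq> {}"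
  then obtain x where xX: "x \<in> X"
    and opt: "\<And>y. y \<in> X \<Longrightarrow> f x - ereal ((\<epsilon> *\<^sub>R d) \<bullet> x) \<le> f y - ereal ((\<epsilon> *\<^sub>R d) \<bullet> y)"
    unfolding Sol_def by blast
  define n where "n = d \<bullet> d"
  have np: "n > 0" using d0 unfolding n_def by simp
  have "f x - ereal ((\<epsilon> *\<^sub>R d) \<bullet> x) \<le> ereal (a - (\<epsilon> *\<^sub>R d) \<bullet> x0)"
    using opt[OF x0] fx0 by simp
  then obtain c where fc: "f x = ereal c"
    using pr unfolding proper_fun_def by (cases "f x") auto
  define C where "C = c - (\<epsilon> *\<^sub>R d) \<bullet> x"
  define M where "M = a - \<epsilon> * (d \<bullet> x0)"
  define s where "s = max 1 (2 * (\<bar>M - C\<bar> + 1) / (\<epsilon> * n))"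
  have sp: "s > 0" unfolding s_def by simp
  have en: "\<epsilon> * n > 0" using ep np by simp
  have sbig: "s * (\<epsilon> * n) \<ge> 2 * (\<bar>M - C\<bar> + 1)"
  proof -
    have "s \<ge> 2 * (\<bar>M - C\<bar> + 1) / (\<epsilon> * n)" unfolding s_def by simp
    then show ?thesis using en by (simp add: field_simps)
  qed
  have rb: "f (x0 + s *\<^sub>R d) \<le> ereal (a + s * (\<epsilon> * n / 2))"
    by (rule ray_bound[OF lsc cvx fx0 dK _ sp]) (use en in simp)
  have "f x - ereal ((\<epsilon> *\<^sub>R d) \<bullet> x) \<le> f (x0 + s *\<^sub>R d) - ereal ((\<epsilon> *\<^sub>R d) \<bullet> (x0 + s *\<^sub>R d))"
    by (rule opt[OF ray_in[OF cX clX x0 dA sp]])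
  also have "\<dots> \<le> ereal (a + s * (\<epsilon> * n / 2)) - ereal ((\<epsilon> *\<^sub>R d) \<bullet> (x0 + s *\<^sub>R d))"
    using rb by (rule ereal_minus_mono) simp
  finally have "C \<le> a + s * (\<epsilon> * n / 2) - (\<epsilon> * (d \<bullet> x0) + s * (\<epsilon> * n))"
    using fc unfolding C_def n_def by (simp add: inner_add_right algebra_simps)
  then have "C \<le> M - s * (\<epsilon> * n) / 2" unfolding M_def by (simp add: algebra_simps)
  then show False using sbig by (simp add: abs_if split: if_splits)
qed

theorem mainTheorem6:
  fixes f :: "'a::euclidean_space \<Rightarrow> ereal" and X :: "'a set"
  assumes "proper_fun f" and "lsc_fun f"
    and "X \<noteq> {}" and "closed X" and "\<not> bounded (dom_fun f \<inter> X)"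
    and "convex X" and "convex_fun f"
    and "asymp_cone X \<inter> Kf f \<noteq> {0}"
  shows "\<exists>u :: nat \<Rightarrow> 'a. u \<longlonglongrightarrow> 0 \<and> (\<forall>k. Sol f X (u k) = {})"
proof -
  obtain x0 where x0: "x0 \<in> dom_fun f \<inter> X" using assms(5) bounded_empty by (metis all_not_in_conv)
  then obtain a where fx0: "f x0 = ereal a"
    using assms(1) unfolding proper_fun_def dom_fun_def by (cases "f x0") auto
  have T: "filterlim (\<lambda>k. real (Suc k)) at_top sequentially"
    by (rule filterlim_compose[OF filterlim_real_sequentially filterlim_Suc])
  have iv: "(\<lambda>k. inverse (real (Suc k))) \<longlonglongrightarrow> 0"
    by (rule tendsto_inverse_0_at_top[OF T])
  have A0: "0 \<in> asymp_cone X"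
  proof -
    have "(\<lambda>k. x0 /\<^sub>R real (Suc k)) \<longlonglongrightarrow> 0"
      using tendsto_scaleR[OF iv tendsto_const[of x0]] by simp
    then show ?thesis unfolding asymp_cone_def using T x0
      by (intro CollectI exI[of _ "\<lambda>k. real (Suc k)"] exI[of _ "\<lambda>k. x0"]) auto
  qed
  have K0: "0 \<in> Kf f"
  proof -
    have dd: "(\<lambda>k. x0 /\<^sub>R real (Suc k)) \<longlonglongrightarrow> 0"
      using tendsto_scaleR[OF iv tendsto_const[of x0]] by simp
    have eq: "(\<lambda>k. f (real (Suc k) *\<^sub>R (x0 /\<^sub>R real (Suc k))) / ereal (real (Suc k)))
        = (\<lambda>k. ereal (a * inverse (real (Suc k))))"
      by (rule ext) (simp add: fx0 divide_inverse del: of_nat_Suc)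
    have "(\<lambda>k. ereal (a * inverse (real (Suc k)))) \<longlonglongrightarrow> ereal (a * 0)"
      by (intro tendsto_intros iv)
    then have "liminf (\<lambda>k. ereal (a * inverse (real (Suc k)))) = 0"
      by (simp add: lim_imp_Liminf zero_ereal_def)
    then have "liminf (\<lambda>k. f (real (Suc k) *\<^sub>R (x0 /\<^sub>R real (Suc k))) / ereal (real (Suc k))) = 0"
      using eq by simp
    then have "asymp_fun f 0 \<le> 0"
      unfolding asymp_fun_def using T dd
      by (intro Inf_lower2[of 0]) (auto intro!: exI[of _ "\<lambda>k. real (Suc k)"] exI[of _ "\<lambda>k. x0 /\<^sub>R real (Suc k)"])
    then show ?thesis unfolding Kf_def by simp
  qed
  obtain d where dA: "d \<in> asymp_cone X" and dK: "d \<in> Kf f" and d0: "d \<noteq> 0"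
    using assms(8) A0 K0 by blast
  define u where "u k = inverse (real (Suc k)) *\<^sub>R d" for k
  have "u \<longlonglongrightarrow> 0"
    unfolding u_def using tendsto_scaleR[OF iv tendsto_const[of d]] by simp
  moreover have "Sol f X (u k) = {}" for k
    unfolding u_def
    by (rule sol_empty[OF assms(1,2,7,6,4) _ fx0 dA _ d0]) (use x0 dK in \<open>auto simp: Kf_def\<close>)
  ultimately show ?thesis by blast
qed

end
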